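(* In the setting below, for every $w\in W_M^Q$, \[ (\chi^M_w-\chi^H_w)(x_Q) = |I_w^M\le s|. \]
   Context: Fix $1\le k\le s<r$. Let $\epsilon_1,\ldots,\epsilon_r$ be an orthonormal basis of a real/complex weight space $\mathfrak{h}^*$, $\epsilon_1^*,\ldots,\epsilon_r^*$ the dual basis of $\mathfrak{h}$. $M=\mathrm{Sp}(2s)\times\mathrm{Sp}(2(r-s))$ has positive roots $R_M^+$: $\epsilon_i\pm\epsilon_j$ ($1\le i<j\le s$), $2\epsilon_i$ ($1\le i\le s$), and $\epsilon_i\pm\epsilon_j$ ($s<i<j\le r$), $2\epsilon_i$ ($s<i\le r$). $H=\mathrm{SO}(2s+1)\times\mathrm{Sp}(2(r-s))$ has the same weight space, positive roots $R^+_H$: $\epsilon_i\pm\epsilon_j$ ($1\le i<j\le s$), $\epsilon_i$ ($1\le i\le s$), and the same second-factor roots as $M$. $M$ and $H$ share the Weyl group $W_M$. $Q$ is the maximal parabolic of $M$ associated to omitting the simple root $\epsilon_k-\epsilon_{k+1}$ of the first factor (so $M/Q\cong\mathrm{IG}(k,2s)$), $Q^H$ the corresponding parabolic of $H$, and $W_M^Q$ the minimal length coset representatives (the same for $Q$ and $Q^H$). $x_Q=\sum_{i=1}^k\epsilon_i^*$. $\chi^M_w=\sum_{\beta\in(R^+_M\setminus R^+_{L})\cap w^{-1}R^+_M}\beta$ with $R^+_L$ the positive roots of the Levi of $Q$, and $\chi^H_w$ defined likewise with $R^+_H$ and the Levi of $Q^H$. $I^M_w\subseteq\{1,\ldots,2s\}$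 is the $k$-subset indexing the Schubert cell $C^M_w$ of $\mathrm{IG}(k,2s)$ relative to the standard isotropic flag of $\mathbb{C}^{2s}$ with ordered basis $e_1,\ldots,e_s,e_s',\ldots,e_1'$ (the cell being $\{W:\dim(W\cap F_j)=|\{i\in I^M_w:i\le j\}|\ \forall j\}$), and $|I\le s|$ is the number of elements of $I$ that are $\le s$. *)

theory Defs
  imports Main "HOL-Library.Function_Algebras"
begin

text \<open>Weights are integer coordinate vectors: a weight lambda = sum_i lambda_i eps_i
  is represented by the function i -> lambda_i (only indices 1..r are used).\<close>

definition eps :: "nat \<Rightarrow> nat \<Rightarrow> int" where
  "eps i = (\<lambda>j. if j = i then 1 else 0)"

definition typeC_pos :: "nat \<Rightarrow> nat \<Rightarrow> (nat \<Rightarrow> int) set" where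
  "typeC_pos a b =
     {eps i - eps j | i j. a < i \<and> i < j \<and> j \<le> b}
   \<union> {eps i + eps j | i j. a < i \<and> i < j \<and> j \<le> b}
   \<union> {(\<lambda>l. 2 * eps i l) | i. a < i \<and> i \<le> b}"

definition typeB_pos :: "nat \<Rightarrow> nat \<Rightarrow> (nat \<Rightarrow> int) set" where
  "typeB_pos a b =
     {eps i - eps j | i j. a < i \<and> i < j \<and> j \<le> b}
   \<union> {eps i + eps j | i j. a < i \<and> i < j \<and> j \<le> b}
   \<union> {eps i | i. a < i \<and> i \<le> b}"

definition typeA_pos :: "nat \<Rightarrow> nat \<Rightarrow> (nat \<Rightarrow> int) set" where
  "typeA_pos a b = {eps i - eps j | i j. a < i \<and> i < j \<and> j \<le> b}"

text \<open>R_M^+ for M = Sp(2s) x Sp(2(r-s)), R_H^+ for H = SO(2s+1) x Sp(2(r-s)).\<close>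
definition RM :: "nat \<Rightarrow> nat \<Rightarrow> (nat \<Rightarrow> int) set" where
  "RM s r = typeC_pos 0 s \<union> typeC_pos s r"

definition RH :: "nat \<Rightarrow> nat \<Rightarrow> (nat \<Rightarrow> int) set" where
  "RH s r = typeB_pos 0 s \<union> typeC_pos s r"

text \<open>Positive roots of the Levi of Q (GL(k) x Sp(2(s-k)) x Sp(2(r-s))) and of
  the Levi of Q^H (GL(k) x SO(2(s-k)+1) x Sp(2(r-s))).\<close>
definition RL :: "nat \<Rightarrow> nat \<Rightarrow> nat \<Rightarrow> (nat \<Rightarrow> int) set" where
  "RL k s r = typeA_pos 0 k \<union> typeC_pos k s \<union> typeC_pos s r"

definition RLH :: "nat \<Rightarrow> nat \<Rightarrow> nat \<Rightarrow> (nat \<Rightarrow> int) set" where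
  "RLH k s r = typeA_pos 0 k \<union> typeB_pos k s \<union> typeC_pos s r"

text \<open>The Weyl group W_M: signed permutations of {1..r} preserving the blocks
  {1..s} and {s+1..r}. An element w is encoded by f :: nat => int with
  w(eps_i) = sgn(f i) eps_|f i| for 1 <= i <= r, and f i = 0 otherwise.\<close>
definition WM :: "nat \<Rightarrow> nat \<Rightarrow> (nat \<Rightarrow> int) set" where
  "WM s r = {f. (\<forall>i. i \<notin> {1..r} \<longrightarrow> f i = 0)
     \<and> (\<forall>i\<in>{1..r}. f i \<noteq> 0 \<and> nat \<bar>f i\<bar> \<in> {1..r} \<and> (i \<le> s \<longleftrightarrow> nat \<bar>f i\<bar> \<le> s))
     \<and> inj_on (\<lambda>i. nat \<bar>f i\<bar>) {1..r}}"

definition act :: "nat \<Rightarrow> (nat \<Rightarrow> int) \<Rightarrow> (nat \<Rightarrow> int) \<Rightarrow> (nat \<Rightarrow> int)" where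
  "act r f lam = (\<lambda>j. \<Sum>i\<in>{1..r}. if nat \<bar>f i\<bar> = j then sgn (f i) * lam i else 0)"

definition comp :: "nat \<Rightarrow> (nat \<Rightarrow> int) \<Rightarrow> (nat \<Rightarrow> int) \<Rightarrow> (nat \<Rightarrow> int)" where
  "comp r w u = (\<lambda>i. if i \<in> {1..r} then sgn (u i) * w (nat \<bar>u i\<bar>) else 0)"

text \<open>Weyl group of the Levi of Q: S_k x W(C_{s-k}) x W(C_{r-s}).\<close>
definition WL :: "nat \<Rightarrow> nat \<Rightarrow> nat \<Rightarrow> (nat \<Rightarrow> int) set" where
  "WL k s r = {u \<in> WM s r. \<forall>i\<in>{1..k}. 0 < u i \<and> u i \<le> int k}"

definition lenM :: "nat \<Rightarrow> nat \<Rightarrow> (nat \<Rightarrow> int) \<Rightarrow> nat" where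
  "lenM s r w = card {\<alpha> \<in> RM s r. act r w \<alpha> \<notin> RM s r}"

definition WQ :: "nat \<Rightarrow> nat \<Rightarrow> nat \<Rightarrow> (nat \<Rightarrow> int) set" where
  "WQ k s r = {w \<in> WM s r. \<forall>u \<in> WL k s r. lenM s r w \<le> lenM s r (comp r w u)}"

definition chiM :: "nat \<Rightarrow> nat \<Rightarrow> nat \<Rightarrow> (nat \<Rightarrow> int) \<Rightarrow> (nat \<Rightarrow> int)" where
  "chiM k s r w = (\<Sum>\<beta> \<in> (RM s r - RL k s r) \<inter> {\<beta>. act r w \<beta> \<in> RM s r}. \<beta>)"

definition chiH :: "nat \<Rightarrow> nat \<Rightarrow> nat \<Rightarrow> (nat \<Rightarrow> int) \<Rightarrow> (nat \<Rightarrow> int)" where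
  "chiH k s r w = (\<Sum>\<beta> \<in> (RH s r - RLH k s r) \<inter> {\<beta>. act r w \<beta> \<in> RH s r}. \<beta>)"

text \<open>Evaluation of a weight at x_Q = eps_1^* + ... + eps_k^*.\<close>
definition evxQ :: "nat \<Rightarrow> (nat \<Rightarrow> int) \<Rightarrow> int" where
  "evxQ k lam = (\<Sum>i\<in>{1..k}. lam i)"

text \<open>I_w^M: positions (in the ordered basis e_1..e_s,e_s'..e_1', e_j' at position
  2s+1-j) of the basis vectors w(e_1),...,w(e_k) spanning the T-fixed point w Q of
  the Schubert cell C_w = B w Q / Q.\<close>
definition IM :: "nat \<Rightarrow> nat \<Rightarrow> (nat \<Rightarrow> int) \<Rightarrow> nat set" where
  "IM k s w = (\<lambda>i. if 0 < w i then nat (w i) else 2 * s + 1 - nat \<bar>w i\<bar>) ` {1..k}"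

end

theory Submission imports Defs begin

lemma sum_fun_apply: "(\<Sum>a\<in>A. (f a :: nat \<Rightarrow> int)) x = (\<Sum>a\<in>A. f a x)"
  by (induction A rule: infinite_finite_induct) auto

definition Pk :: "nat \<Rightarrow> nat \<Rightarrow> (nat \<Rightarrow> int) set" where
  "Pk a b = {eps i - eps j | i j. a < i \<and> i < j \<and> j \<le> b}
   \<union> {eps i + eps j | i j. a < i \<and> i < j \<and> j \<le> b}"
definition L2 :: "nat \<Rightarrow> nat \<Rightarrow> (nat \<Rightarrow> int) set" where
  "L2 a b = {(\<lambda>l. 2 * eps i l) | i. a < i \<and> i \<le> b}"
definition L1 :: "nat \<Rightarrow> nat \<Rightarrow> (nat \<Rightarrow> int) set" where
  "L1 a b = {eps i | i. a < i \<and> i \<le> b}"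

lemma C_eq: "typeC_pos a b = Pk a b \<union> L2 a b"
  unfolding typeC_pos_def Pk_def L2_def by blast
lemma B_eq: "typeB_pos a b = Pk a b \<union> L1 a b"
  unfolding typeB_pos_def Pk_def L1_def by blast

lemma fin_Pk: "finite (Pk a b)"
proof -
  have "Pk a b \<subseteq> (\<lambda>(i,j). eps i - eps j) ` ({..b}\<times>{..b}) \<union> (\<lambda>(i,j). eps i + eps j) ` ({..b}\<times>{..b})"
    unfolding Pk_def by force
  thus ?thesis by (rule finite_subset) auto
qed
lemma fin_L2: "finite (L2 a b)"
proof -
  have "L2 a b \<subseteq> (\<lambda>i l. 2 * eps i l) ` {..b}" unfolding L2_def by force
  thus ?thesis by (rule finite_subset) auto
qed
lemma fin_L1: "finite (L1 a b)"
proof -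
  have "L1 a b \<subseteq> eps ` {..b}" unfolding L1_def by force
  thus ?thesis by (rule finite_subset) auto
qed

lemma Pk_mono: "a \<le> a' \<Longrightarrow> b' \<le> b \<Longrightarrow> Pk a' b' \<subseteq> Pk a b"
  unfolding Pk_def by fastforce
lemma A_sub: "typeA_pos a b \<subseteq> Pk a b"
  unfolding typeA_pos_def Pk_def by blast
lemma L2_mono: "a \<le> a' \<Longrightarrow> L2 a' b \<subseteq> L2 a b"
  unfolding L2_def by fastforce
lemma L1_mono: "a \<le> a' \<Longrightarrow> L1 a' b \<subseteq> L1 a b"
  unfolding L1_def by fastforce



lemma Pk_form: "x \<in> Pk a b \<Longrightarrow> \<exists>i j. a < i \<and> i < j \<and> j \<le> b \<and> x i = 1 \<and> x j \<noteq> 0"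
proof -
  assume "x \<in> Pk a b"
  then obtain i j where ij: "a < i" "i < j" "j \<le> b" "x = eps i - eps j \<or> x = eps i + eps j"
    unfolding Pk_def by blast
  hence "x i = 1 \<and> x j \<noteq> 0" by (auto simp: eps_def)
  with ij show ?thesis by blast
qed
lemma L2_form: "x \<in> L2 a b \<Longrightarrow> \<exists>i. a < i \<and> i \<le> b \<and> x = (\<lambda>l. 2 * eps i l)"
  unfolding L2_def by auto
lemma L1_form: "x \<in> L1 a b \<Longrightarrow> \<exists>i. a < i \<and> i \<le> b \<and> x = eps i"
  unfolding L1_def by auto
lemma single_supp: "x \<in> L2 0 s \<union> L1 0 s \<Longrightarrow> x i \<noteq> 0 \<Longrightarrow> x j \<noteq> 0 \<Longrightarrow> i = j \<and> i \<le> s"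
  unfolding L2_def L1_def by (auto simp: eps_def split: if_splits)
lemma Pk_not_single: "x \<in> Pk a b \<Longrightarrow> x \<notin> L2 0 s \<union> L1 0 s"
proof
  assume "x \<in> Pk a b" "x \<in> L2 0 s \<union> L1 0 s"
  then obtain i j where "i < j" "x i = 1" "x j \<noteq> 0" using Pk_form by blast
  with single_supp[OF \<open>x \<in> L2 0 s \<union> L1 0 s\<close>, of i j] show False by simp
qed
lemma L2_not_L1: "x \<in> L2 0 s \<Longrightarrow> x \<notin> L1 0 t"
proof
  assume "x \<in> L2 0 s" "x \<in> L1 0 t"
  then obtain i j where "x = (\<lambda>l. 2 * eps i l)" "x = eps j" using L2_form L1_form by blast
  hence "2 * eps i j = eps j j" "2 * eps i i = eps j i" by metis+
  thus False by (simp add: eps_def split: if_splits)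
qed

lemma L2hi_not_single: "x \<in> L2 s r \<Longrightarrow> x \<notin> L2 0 s \<union> L1 0 s"
proof
  assume "x \<in> L2 s r" "x \<in> L2 0 s \<union> L1 0 s"
  then obtain i where "s < i" "x = (\<lambda>l. 2 * eps i l)" using L2_form by blast
  hence "x i \<noteq> 0" by (simp add: eps_def)
  with single_supp[OF \<open>x \<in> L2 0 s \<union> L1 0 s\<close>, of i i] \<open>s < i\<close> show False by simp
qed

lemma pos_coord: "x \<in> Pk a b \<union> L2 c d \<union> L1 e f \<Longrightarrow> \<exists>j. x j > 0"
proof -
  assume "x \<in> Pk a b \<union> L2 c d \<union> L1 e f"
  then consider "x \<in> Pk a b" | "x \<in> L2 c d" | "x \<in> L1 e f" by blast
  thus ?thesis
  proof cases
    case 1 then obtain i j where "x i = 1" using Pk_form by blast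
    thus ?thesis by (intro exI[of _ i]) simp
  next
    case 2 then obtain i where "x = (\<lambda>l. 2 * eps i l)" using L2_form by blast
    hence "x i > 0" by (simp add: eps_def)
    thus ?thesis by blast
  next
    case 3 then obtain i where "x = eps i" using L1_form by blast
    hence "x i > 0" by (simp add: eps_def)
    thus ?thesis by blast
  qed
qed

lemma WM_D:
  assumes "w \<in> WM s r" "i \<in> {1..r}"
  shows "w i \<noteq> 0" "nat \<bar>w i\<bar> \<in> {1..r}" "i \<le> s \<longleftrightarrow> nat \<bar>w i\<bar> \<le> s"
proof -
  have "\<forall>i\<in>{1..r}. w i \<noteq> 0 \<and> nat \<bar>w i\<bar> \<in> {1..r} \<and> (i \<le> s \<longleftrightarrow> nat \<bar>w i\<bar> \<le> s)"
    using assms(1) unfolding WM_def by blast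
  with assms(2) show "w i \<noteq> 0" "nat \<bar>w i\<bar> \<in> {1..r}" "i \<le> s \<longleftrightarrow> nat \<bar>w i\<bar> \<le> s" by blast+
qed

lemma WM_inj:
  assumes "w \<in> WM s r" "i \<in> {1..r}" "j \<in> {1..r}" "nat \<bar>w i\<bar> = nat \<bar>w j\<bar>"
  shows "i = j"
proof -
  have "inj_on (\<lambda>i. nat \<bar>w i\<bar>) {1..r}" using assms(1) unfolding WM_def by blast
  thus ?thesis using assms(2-4) unfolding inj_on_def by blast
qed

lemma act_eps:
  assumes "i \<in> {1..r}"
  shows "act r w (eps i) = (\<lambda>j. if j = nat \<bar>w i\<bar> then sgn (w i) else 0)"
proof
  fix j
  have "act r w (eps i) j = (\<Sum>i'\<in>{1..r}. if i' = i then (if nat \<bar>w i\<bar> = j then sgn (w i) else 0) else 0)"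
    unfolding act_def eps_def by (intro sum.cong) auto
  also have "\<dots> = (if nat \<bar>w i\<bar> = j then sgn (w i) else 0)"
    using assms by (simp add: sum.delta)
  finally show "act r w (eps i) j = (if j = nat \<bar>w i\<bar> then sgn (w i) else 0)" by auto
qed

lemma act_add: "act r w (x + y) = act r w x + act r w y"
proof
  fix j
  have "act r w (x + y) j = (\<Sum>i\<in>{1..r}. (if nat \<bar>w i\<bar> = j then sgn (w i) * x i else 0) + (if nat \<bar>w i\<bar> = j then sgn (w i) * y i else 0))"
    unfolding act_def by (intro sum.cong) (auto simp: distrib_left)
  also have "\<dots> = act r w x j + act r w y j" unfolding act_def by (rule sum.distrib)
  finally show "act r w (x + y) j = (act r w x + act r w y) j" by simp
qed
lemma act_diff: "act r w (x - y) = act r w x - act r w y"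
proof
  fix j
  have "act r w (x - y) j = (\<Sum>i\<in>{1..r}. (if nat \<bar>w i\<bar> = j then sgn (w i) * x i else 0) - (if nat \<bar>w i\<bar> = j then sgn (w i) * y i else 0))"
    unfolding act_def by (intro sum.cong) (auto simp: right_diff_distrib)
  also have "\<dots> = act r w x j - act r w y j" unfolding act_def by (rule sum_subtractf)
  finally show "act r w (x - y) j = (act r w x - act r w y) j" by simp
qed
lemma act_2: "act r w (\<lambda>l. 2 * x l) = (\<lambda>l. 2 * act r w x l)"
proof
  fix j
  have "act r w (\<lambda>l. 2 * x l) j = (\<Sum>i\<in>{1..r}. 2 * (if nat \<bar>w i\<bar> = j then sgn (w i) * x i else 0))"
    unfolding act_def by (intro sum.cong) auto
  also have "\<dots> = 2 * act r w x j" unfolding act_def by (rule sum_distrib_left[symmetric])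
  finally show "act r w (\<lambda>l. 2 * x l) j = 2 * act r w x j" .
qed

lemma G1:
  assumes w: "w \<in> WM s r" and sr: "s \<le> r" and b: "\<beta> \<in> Pk 0 r \<union> L2 s r"
  shows "act r w \<beta> \<notin> L2 0 s \<union> L1 0 s"
proof
  assume H: "act r w \<beta> \<in> L2 0 s \<union> L1 0 s"
  from b consider "\<beta> \<in> Pk 0 r" | "\<beta> \<in> L2 s r" by blast
  thus False
  proof cases
    case 1
    then obtain i j where ij: "0 < i" "i < j" "j \<le> r" "\<beta> = eps i - eps j \<or> \<beta> = eps i + eps j"
      unfolding Pk_def by blast
    have ir: "i \<in> {1..r}" and jr: "j \<in> {1..r}" using ij by auto
    define a where "a = nat \<bar>w i\<bar>"
    define c where "c = nat \<bar>w j\<bar>"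
    have ac: "a \<noteq> c" using WM_inj[OF w ir jr] ij unfolding a_def c_def by auto
    have wi: "w i \<noteq> 0" "w j \<noteq> 0" using WM_D[OF w ir] WM_D[OF w jr] by auto
    have e1: "act r w (eps i) = (\<lambda>l. if l = a then sgn (w i) else 0)" using act_eps[OF ir] a_def by simp
    have e2: "act r w (eps j) = (\<lambda>l. if l = c then sgn (w j) else 0)" using act_eps[OF jr] c_def by simp
    have "act r w \<beta> a \<noteq> 0 \<and> act r w \<beta> c \<noteq> 0"
      using ij(4) ac wi by (auto simp: act_diff act_add e1 e2 sgn_if split: if_splits)
    with single_supp[OF H, of a c] ac show False by simp
  next
    case 2
    then obtain i where i: "s < i" "i \<le> r" "\<beta> = (\<lambda>l. 2 * eps i l)" using L2_form by blast
    have ir: "i \<in> {1..r}" using i by auto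
    define a where "a = nat \<bar>w i\<bar>"
    have as: "\<not> a \<le> s" using WM_D[OF w ir] i a_def by auto
    have wi: "w i \<noteq> 0" using WM_D[OF w ir] by auto
    have "act r w \<beta> a \<noteq> 0" using wi i(3) by (simp add: act_2 act_eps[OF ir] a_def sgn_if)
    with single_supp[OF H, of a a] as show False by simp
  qed
qed

lemma G2:
  assumes w: "w \<in> WM s r" and ir: "i \<in> {1..s}" and sr: "s \<le> r"
  shows "act r w (\<lambda>l. 2 * eps i l) \<in> Pk 0 s \<union> L2 0 s \<union> Pk s r \<union> L2 s r \<longleftrightarrow> w i > 0"
    and "act r w (eps i) \<in> Pk 0 s \<union> L1 0 s \<union> Pk s r \<union> L2 s r \<longleftrightarrow> w i > 0"
proof -
  have ir': "i \<in> {1..r}" using ir sr by auto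
  define a where "a = nat \<bar>w i\<bar>"
  have a: "1 \<le> a" "a \<le> s" using WM_D[OF w ir'] ir a_def by auto
  have wi: "w i \<noteq> 0" using WM_D[OF w ir'] by auto
  have e: "act r w (eps i) = (\<lambda>l. if l = a then sgn (w i) else 0)" using act_eps[OF ir'] a_def by simp
  show "act r w (\<lambda>l. 2 * eps i l) \<in> Pk 0 s \<union> L2 0 s \<union> Pk s r \<union> L2 s r \<longleftrightarrow> w i > 0"
  proof
    assume H: "act r w (\<lambda>l. 2 * eps i l) \<in> Pk 0 s \<union> L2 0 s \<union> Pk s r \<union> L2 s r"
    have "\<exists>j. act r w (\<lambda>l. 2 * eps i l) j > 0"
    proof -
      from H consider "act r w (\<lambda>l. 2 * eps i l) \<in> Pk 0 s \<union> L2 0 s \<union> L1 0 0" | "act r w (\<lambda>l. 2 * eps i l) \<in> Pk s r \<union> L2 s r \<union> L1 0 0" by blast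
      thus ?thesis by cases (rule pos_coord, assumption)+
    qed
    then obtain j where "act r w (\<lambda>l. 2 * eps i l) j > 0" by blast
    thus "w i > 0" by (auto simp: act_2 e sgn_if split: if_splits)
  next
    assume "w i > 0"
    hence "act r w (\<lambda>l. 2 * eps i l) = (\<lambda>l. 2 * eps a l)" by (simp add: act_2 e) (auto simp: eps_def fun_eq_iff)
    moreover have "(\<lambda>l. 2 * eps a l) \<in> L2 0 s" unfolding L2_def using a by auto
    ultimately show "act r w (\<lambda>l. 2 * eps i l) \<in> Pk 0 s \<union> L2 0 s \<union> Pk s r \<union> L2 s r" by simp
  qed
  show "act r w (eps i) \<in> Pk 0 s \<union> L1 0 s \<union> Pk s r \<union> L2 s r \<longleftrightarrow> w i > 0"
  proof
    assume H: "act r w (eps i) \<in> Pk 0 s \<union> L1 0 s \<union> Pk s r \<union> L2 s r"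
    have "\<exists>j. act r w (eps i) j > 0"
    proof -
      from H consider "act r w (eps i) \<in> Pk 0 s \<union> L2 s r \<union> L1 0 s" | "act r w (eps i) \<in> Pk s r \<union> L2 s r \<union> L1 0 s" by blast
      thus ?thesis by cases (rule pos_coord, assumption)+
    qed
    thus "w i > 0" by (auto simp: e sgn_if split: if_splits)
  next
    assume "w i > 0"
    hence "act r w (eps i) = eps a" by (simp add: e) (auto simp: eps_def fun_eq_iff)
    moreover have "eps a \<in> L1 0 s" unfolding L1_def using a by auto
    ultimately show "act r w (eps i) \<in> Pk 0 s \<union> L1 0 s \<union> Pk s r \<union> L2 s r" by simp
  qed
qed

theorem mainTheorem8:
  fixes k s r :: nat and w :: "nat \<Rightarrow> int"
  assumes "1 \<le> k" and "k \<le> s" and "s < r"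
    and "w \<in> WQ k s r"
  shows "evxQ k (chiM k s r w - chiH k s r w) = int (card {i \<in> IM k s w. i \<le> s})"
proof -
  have w: "w \<in> WM s r" using assms(4) unfolding WQ_def by blast
  have ks: "k \<le> s" and sr: "s \<le> r" using assms by auto
  define X where "X = Pk 0 s \<union> Pk s r \<union> L2 s r"
  define Y where "Y = typeA_pos 0 k \<union> Pk k s \<union> Pk s r \<union> L2 s r"
  define S where "S = {i\<in>{1..k}. w i > 0}"
  have RM: "RM s r = X \<union> L2 0 s" unfolding RM_def C_eq X_def by blast
  have RH: "RH s r = X \<union> L1 0 s" unfolding RH_def C_eq B_eq X_def by blast
  have RL: "RL k s r = Y \<union> L2 k s" unfolding RL_def C_eq Y_def by blast
  have RLH: "RLH k s r = Y \<union> L1 k s" unfolding RLH_def C_eq B_eq Y_def by blast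
  have YX: "Y \<subseteq> X" unfolding Y_def X_def using A_sub[of 0 k] Pk_mono[of 0 0 k s] Pk_mono[of 0 k s s] ks by blast
  have XP: "X \<subseteq> Pk 0 r \<union> L2 s r" unfolding X_def using Pk_mono[of 0 0 s r] Pk_mono[of 0 s r r] sr by blast
  have Xdisj: "x \<notin> L2 0 s \<union> L1 0 s" if "x \<in> X" for x
    using that Pk_not_single L2hi_not_single unfolding X_def by blast
  have RM4: "RM s r = Pk 0 s \<union> L2 0 s \<union> Pk s r \<union> L2 s r" unfolding RM X_def by blast
  have RH4: "RH s r = Pk 0 s \<union> L1 0 s \<union> Pk s r \<union> L2 s r" unfolding RH X_def by blast
  define A where "A = (RM s r - RL k s r) \<inter> {\<beta>. act r w \<beta> \<in> RM s r}"
  define B where "B = (RH s r - RLH k s r) \<inter> {\<beta>. act r w \<beta> \<in> RH s r}"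
  have finX: "finite X" unfolding X_def using fin_Pk fin_L2 by blast
  have finA: "finite A" unfolding A_def RM using finX fin_L2 by blast
  have finB: "finite B" unfolding B_def RH using finX fin_L1 by blast
  have AXB: "A \<inter> X = B \<inter> X"
  proof (intro equalityI subsetI)
    fix x assume x: "x \<in> A \<inter> X"
    hence xX: "x \<in> X" by blast
    have "act r w x \<notin> L2 0 s \<union> L1 0 s" using G1[OF w sr] XP xX by blast
    thus "x \<in> B \<inter> X" using x Xdisj[OF xX] L2_mono[of 0 k s] L1_mono[of 0 k s]
      unfolding A_def B_def RM RH RL RLH by blast
  next
    fix x assume x: "x \<in> B \<inter> X"
    hence xX: "x \<in> X" by blast
    have "act r w x \<notin> L2 0 s \<union> L1 0 s" using G1[OF w sr] XP xX by blast
    thus "x \<in> A \<inter> X" using x Xdisj[OF xX] L2_mono[of 0 k s] L1_mono[of 0 k s]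
      unfolding A_def B_def RM RH RL RLH by blast
  qed
  have AmX: "A - X = (\<lambda>i l. 2 * eps i l) ` S"
  proof (intro equalityI subsetI)
    fix x assume x: "x \<in> A - X"
    hence "x \<in> L2 0 s" unfolding A_def RM by blast
    then obtain i where i: "0 < i" "i \<le> s" "x = (\<lambda>l. 2 * eps i l)" using L2_form by blast
    have "\<not> k < i"
    proof
      assume "k < i"
      hence "x \<in> L2 k s" using i unfolding L2_def by blast
      thus False using x unfolding A_def RL by blast
    qed
    moreover have "w i > 0" using G2(1)[OF w _ sr, of i] i x unfolding A_def RM4 by auto
    ultimately show "x \<in> (\<lambda>i l. 2 * eps i l) ` S" using i unfolding S_def by auto
  next
    fix x assume "x \<in> (\<lambda>i l. 2 * eps i l) ` S"
    then obtain i where i: "i \<in> {1..k}" "w i > 0" "x = (\<lambda>l. 2 * eps i l)" unfolding S_def by blast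
    have xL: "x \<in> L2 0 s" using i ks unfolding L2_def by auto
    have "x \<notin> L2 k s"
    proof
      assume "x \<in> L2 k s"
      then obtain m where m: "k < m" "x = (\<lambda>l. 2 * eps m l)" using L2_form by blast
      hence "2 * eps m i = 2 * eps i i" using i by metis
      thus False using m i by (auto simp: eps_def split: if_splits)
    qed
    moreover have "x \<notin> X" using Xdisj xL by blast
    moreover have "act r w x \<in> RM s r" using G2(1)[OF w _ sr, of i] i ks unfolding RM4 by auto
    ultimately show "x \<in> A - X" using xL YX unfolding A_def RM RL by blast
  qed
  have BmX: "B - X = eps ` S"
  proof (intro equalityI subsetI)
    fix x assume x: "x \<in> B - X"
    hence "x \<in> L1 0 s" unfolding B_def RH by blast
    then obtain i where i: "0 < i" "i \<le> s" "x = eps i" using L1_form by blast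
    have "\<not> k < i"
    proof
      assume "k < i"
      hence "x \<in> L1 k s" using i unfolding L1_def by blast
      thus False using x unfolding B_def RLH by blast
    qed
    moreover have "w i > 0" using G2(2)[OF w _ sr, of i] i x unfolding B_def RH4 by auto
    ultimately show "x \<in> eps ` S" using i unfolding S_def by auto
  next
    fix x assume "x \<in> eps ` S"
    then obtain i where i: "i \<in> {1..k}" "w i > 0" "x = eps i" unfolding S_def by blast
    have xL: "x \<in> L1 0 s" using i ks unfolding L1_def by auto
    have "x \<notin> L1 k s"
    proof
      assume "x \<in> L1 k s"
      then obtain m where m: "k < m" "x = eps m" using L1_form by blast
      hence "eps m i = eps i i" using i by metis
      thus False using m i by (auto simp: eps_def split: if_splits)
    qed
    moreover have "x \<notin> X" using Xdisj xL by blast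
    moreover have "act r w x \<in> RH s r" using G2(2)[OF w _ sr, of i] i ks unfolding RH4 by auto
    ultimately show "x \<in> B - X" using xL YX unfolding B_def RH RLH by blast
  qed
  have finS: "finite S" unfolding S_def by auto
  have inj2: "inj_on (\<lambda>i l. 2 * eps i l) S"
  proof
    fix i j assume "(\<lambda>l. 2 * eps i l) = (\<lambda>l. 2 * (eps j l :: int))"
    hence "2 * eps i i = 2 * (eps j i :: int)" by metis
    thus "i = j" by (auto simp: eps_def split: if_splits)
  qed
  have inj1: "inj_on eps S"
  proof
    fix i j assume "eps i = eps j"
    hence "eps i i = eps j i" by metis
    thus "i = j" by (auto simp: eps_def split: if_splits)
  qed
  have "chiM k s r w = sum (\<lambda>b. b) (A \<inter> X) + sum (\<lambda>b. b) (A - X)"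
    unfolding chiM_def A_def[symmetric] using finA by (rule sum.Int_Diff)
  moreover have "chiH k s r w = sum (\<lambda>b. b) (B \<inter> X) + sum (\<lambda>b. b) (B - X)"
    unfolding chiH_def B_def[symmetric] using finB by (rule sum.Int_Diff)
  ultimately have "chiM k s r w - chiH k s r w = sum (\<lambda>b. b) (A - X) - sum (\<lambda>b. b) (B - X)"
    using AXB by simp
  also have "\<dots> = (\<Sum>i\<in>S. (\<lambda>l. 2 * eps i l)) - (\<Sum>i\<in>S. eps i)"
    unfolding AmX BmX using sum.reindex[OF inj2, of "\<lambda>b. b"] sum.reindex[OF inj1, of "\<lambda>b. b"] by simp
  finally have D: "(chiM k s r w - chiH k s r w) j = (\<Sum>i\<in>S. eps i j)" for j
    by (simp add: sum_fun_apply sum_distrib_left[symmetric])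
  have "evxQ k (chiM k s r w - chiH k s r w) = (\<Sum>j\<in>{1..k}. \<Sum>i\<in>S. eps i j)"
    unfolding evxQ_def D ..
  also have "\<dots> = (\<Sum>i\<in>S. \<Sum>j\<in>{1..k}. eps i j)" by (rule sum.swap)
  also have "\<dots> = (\<Sum>i\<in>S. 1)"
  proof (rule sum.cong)
    fix i assume "i \<in> S"
    hence "i \<in> {1..k}" unfolding S_def by blast
    thus "(\<Sum>j\<in>{1..k}. eps i j) = 1" unfolding eps_def by (simp add: sum.delta')
  qed simp
  also have "\<dots> = int (card S)" by simp
  finally have L: "evxQ k (chiM k s r w - chiH k s r w) = int (card S)" .
  have IMeq: "{i \<in> IM k s w. i \<le> s} = (\<lambda>i. nat (w i)) ` S"
  proof (intro equalityI subsetI)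
    fix x assume "x \<in> {i \<in> IM k s w. i \<le> s}"
    then obtain i where i: "i \<in> {1..k}" "x = (if 0 < w i then nat (w i) else 2 * s + 1 - nat \<bar>w i\<bar>)" "x \<le> s"
      unfolding IM_def by blast
    have ir: "i \<in> {1..r}" using i ks sr by auto
    have "nat \<bar>w i\<bar> \<le> s" using WM_D(3)[OF w ir] i ks by auto
    hence "w i > 0" using i by (auto split: if_splits)
    thus "x \<in> (\<lambda>i. nat (w i)) ` S" using i unfolding S_def by auto
  next
    fix x assume "x \<in> (\<lambda>i. nat (w i)) ` S"
    then obtain i where i: "i \<in> {1..k}" "w i > 0" "x = nat (w i)" unfolding S_def by blast
    have ir: "i \<in> {1..r}" using i ks sr by auto
    have "nat \<bar>w i\<bar> \<le> s" using WM_D(3)[OF w ir] i ks by auto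
    hence "x \<le> s" using i by auto
    moreover have "x \<in> IM k s w" unfolding IM_def using i by force
    ultimately show "x \<in> {i \<in> IM k s w. i \<le> s}" by blast
  qed
  have "inj_on (\<lambda>i. nat (w i)) S"
  proof
    fix i j assume ij: "i \<in> S" "j \<in> S" "nat (w i) = nat (w j)"
    hence "i \<in> {1..r}" "j \<in> {1..r}" "nat \<bar>w i\<bar> = nat \<bar>w j\<bar>" using ks sr unfolding S_def by auto
    thus "i = j" using WM_inj[OF w] by blast
  qed
  hence "card {i \<in> IM k s w. i \<le> s} = card S" unfolding IMeq by (rule card_image)
  with L show ?thesis by simp
qed
end
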